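(* Let $n\ge 1$ and let $G$ be a subgame with $|G|\le n$. For integers $d\ge 0$, $\ell\ge 0$, let $R(d,\ell)$ be the maximal total number of calls to $\mathrm{Solve}_\mathsf{E}$ and $\mathrm{Solve}_\mathsf{O}$ of Algorithm 2 (including the initial call) performed during an execution of $\mathrm{Solve}_\mathsf{E}(G,d,p_\mathsf{E},p_\mathsf{O})$ if $d$ is even, or of $\mathrm{Solve}_\mathsf{O}(G,d,p_\mathsf{O},p_\mathsf{E})$ if $d$ is odd, over all such subgames $G$ with priorities at most $d$ and all integers $p_\mathsf{E},p_\mathsf{O}\ge1$ with $\lfloor\log_2 p_\mathsf{E}\rfloor+\lfloor\log_2 p_\mathsf{O}\rfloor=\ell$. Then $R(d,\ell)\le 2\,n^{\ell}\binom{d+\ell}{\ell}-1$.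
   Context: A parity game is $\mathcal{G}=(V,V_\mathsf{E},E,\pi)$: $(V,E)$ a finite directed graph without self-loops, every vertex having a successor; $\pi\colon V\to\{1,\dots,d\}$ positive priorities; $V_\mathsf{E}$ Even's vertices, $V_\mathsf{O}=V\setminus V_\mathsf{E}$ Odd's vertices. A subgame is given by $G\subseteq V$ in which every vertex has a successor in $G$. $\mathrm{Attr}_\wp(S,G)$ is the set of vertices from which player $\wp$ has a strategy in $G$ agreeing only with plays reaching $S$. Algorithm 2. $\mathrm{Solve}_\mathsf{E}(G,d,p_\mathsf{E},p_\mathsf{O})$ (for even $d$): if $G=\emptyset$ or $p_\mathsf{E}\le 1$, return $\emptyset$. Otherwise: repeat $\{N_d:=\{v\in G:\pi(v)=d\}$; $H:=G\setminus\mathrm{Attr}_\mathsf{E}(N_d,G)$; $W_\mathsf{O}:=\mathrm{Solve}_\mathsf{O}(H,d-1,\lfloor p_\mathsf{O}/2\rfloor,p_\mathsf{E})$; $G:=G\setminus\mathrm{Attr}_\mathsf{O}(W_\mathsf{O},G)\}$ until $W_\mathsf{O}=\emptyset$. Then (with $H$ from the last repeat iteration) $W_\mathsf{O}:=\mathrm{Solve}_\mathsf{O}(H,d-1,p_\mathsf{O},p_\mathsf{E})$; $G:=G\setminus\mathrm{Attr}_\mathsf{O}(W_\mathsf{O},G)$. Then while $W_\mathsf{O}\ne\emptyset$: $\{N_d:=\{v\in G:\pi(v)=d\}$; $H:=G\setminus\mathrm{Attr}_\mathsf{E}(N_d,G)$; $W_\mathsf{O}:=\mathrm{Solve}_\mathsf{O}(H,d-1,\lfloor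 p_\mathsf{O}/2\rfloor,p_\mathsf{E})$; $G:=G\setminus\mathrm{Attr}_\mathsf{O}(W_\mathsf{O},G)\}$. Return $G$. $\mathrm{Solve}_\mathsf{O}(G,d,p_\mathsf{O},p_\mathsf{E})$ (for odd $d$) is the dual, obtained by swapping the roles of Even and Odd: it returns $\emptyset$ if $G=\emptyset$ or $p_\mathsf{O}\le 1$; otherwise it uses $H:=G\setminus\mathrm{Attr}_\mathsf{O}(N_d,G)$, $W_\mathsf{E}:=\mathrm{Solve}_\mathsf{E}(H,d-1,\lfloor p_\mathsf{E}/2\rfloor,p_\mathsf{O})$ in both loops, $W_\mathsf{E}:=\mathrm{Solve}_\mathsf{E}(H,d-1,p_\mathsf{E},p_\mathsf{O})$ in the middle step, and updates $G:=G\setminus\mathrm{Attr}_\mathsf{E}(W_\mathsf{E},G)$. *)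

theory Defs
  imports Complex_Main
begin

text \<open>Players are encoded as booleans: True = Even, False = Odd.
  The owner of vertex v is Even iff v is in VE.\<close>

definition parity_game :: "'v set \<Rightarrow> 'v set \<Rightarrow> ('v \<times> 'v) set \<Rightarrow> ('v \<Rightarrow> nat) \<Rightarrow> bool" where
  "parity_game V VE E \<pi> \<longleftrightarrow>
     finite V \<and> VE \<subseteq> V \<and> E \<subseteq> V \<times> V \<and>
     (\<forall>v. (v, v) \<notin> E) \<and>
     (\<forall>v\<in>V. \<exists>w. (v, w) \<in> E) \<and>
     (\<forall>v\<in>V. 1 \<le> \<pi> v)"

definition subgame :: "'v set \<Rightarrow> ('v \<times> 'v) set \<Rightarrow> 'v set \<Rightarrow> bool" where
  "subgame V E G \<longleftrightarrow> G \<subseteq> V \<and> (\<forall>v\<in>G. \<exists>w\<in>G. (v, w) \<in> E)"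

definition strategy_in :: "'v set \<Rightarrow> ('v \<times> 'v) set \<Rightarrow> bool \<Rightarrow> 'v set \<Rightarrow> ('v list \<Rightarrow> 'v) \<Rightarrow> bool" where
  "strategy_in VE E pl G \<sigma> \<longleftrightarrow>
     (\<forall>xs. xs \<noteq> [] \<and> last xs \<in> G \<and> (last xs \<in> VE) = pl \<longrightarrow>
        \<sigma> xs \<in> G \<and> (last xs, \<sigma> xs) \<in> E)"

definition consistent_play :: "'v set \<Rightarrow> ('v \<times> 'v) set \<Rightarrow> bool \<Rightarrow> 'v set \<Rightarrow> ('v list \<Rightarrow> 'v) \<Rightarrow> 'v \<Rightarrow> (nat \<Rightarrow> 'v) \<Rightarrow> bool" where
  "consistent_play VE E pl G \<sigma> v \<rho> \<longleftrightarrow>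
     \<rho> 0 = v \<and> (\<forall>i. \<rho> i \<in> G \<and> (\<rho> i, \<rho> (Suc i)) \<in> E) \<and>
     (\<forall>i. (\<rho> i \<in> VE) = pl \<longrightarrow> \<rho> (Suc i) = \<sigma> (map \<rho> [0..<Suc i]))"

definition attr :: "'v set \<Rightarrow> ('v \<times> 'v) set \<Rightarrow> bool \<Rightarrow> 'v set \<Rightarrow> 'v set \<Rightarrow> 'v set" where
  "attr VE E pl S G = {v \<in> G. \<exists>\<sigma>. strategy_in VE E pl G \<sigma> \<and>
       (\<forall>\<rho>. consistent_play VE E pl G \<sigma> v \<rho> \<longrightarrow> (\<exists>i. \<rho> i \<in> S))}"

text \<open>Executions of Algorithm 2 with call counts.
  solve_run VE E pi d G p q W c: the call Solve_pl(G,d,p,q), where pl is Even if d is even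
  and Odd otherwise, p is the precision of pl and q that of the opponent, terminates returning
  W and makes c calls to Solve_E/Solve_O in total (including itself).
  loop1 ... G p q Gf Hl c: the repeat-until loop started on G ends with set Gf, its last H is Hl,
  and it makes c Solve calls.
  loop2 ... G p q b Gf c: the while loop (with current condition b = (W \<noteq> {})) started on G
  ends with Gf making c Solve calls.\<close>
inductive solve_run :: "'v set \<Rightarrow> ('v \<times> 'v) set \<Rightarrow> ('v \<Rightarrow> nat) \<Rightarrow> nat \<Rightarrow> 'v set \<Rightarrow> nat \<Rightarrow> nat \<Rightarrow> 'v set \<Rightarrow> nat \<Rightarrow> bool"
  and loop1 :: "'v set \<Rightarrow> ('v \<times> 'v) set \<Rightarrow> ('v \<Rightarrow> nat) \<Rightarrow> nat \<Rightarrow> 'v set \<Rightarrow> nat \<Rightarrow> nat \<Rightarrow> 'v set \<Rightarrow> 'v set \<Rightarrow> nat \<Rightarrow> bool"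
  and loop2 :: "'v set \<Rightarrow> ('v \<times> 'v) set \<Rightarrow> ('v \<Rightarrow> nat) \<Rightarrow> nat \<Rightarrow> 'v set \<Rightarrow> nat \<Rightarrow> nat \<Rightarrow> bool \<Rightarrow> 'v set \<Rightarrow> nat \<Rightarrow> bool"
  for VE :: "'v set" and E :: "('v \<times> 'v) set" and \<pi> :: "'v \<Rightarrow> nat"
where
  solve_base:
    "G = {} \<or> p \<le> 1 \<Longrightarrow> solve_run VE E \<pi> d G p q {} 1"
| solve_step:
    "\<lbrakk> G \<noteq> {}; 1 < p;
       loop1 VE E \<pi> d G p q G1 H c1;
       solve_run VE E \<pi> (d - 1) H q p W c2;
       G2 = G1 - attr VE E (odd d) W G1;
       loop2 VE E \<pi> d G2 p q (W \<noteq> {}) G3 c3 \<rbrakk>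
     \<Longrightarrow> solve_run VE E \<pi> d G p q G3 (1 + c1 + c2 + c3)"
| loop1_stop:
    "\<lbrakk> H = G - attr VE E (even d) {v \<in> G. \<pi> v = d} G;
       solve_run VE E \<pi> (d - 1) H (q div 2) p W c;
       W = {} \<rbrakk>
     \<Longrightarrow> loop1 VE E \<pi> d G p q (G - attr VE E (odd d) W G) H c"
| loop1_cont:
    "\<lbrakk> H = G - attr VE E (even d) {v \<in> G. \<pi> v = d} G;
       solve_run VE E \<pi> (d - 1) H (q div 2) p W c;
       W \<noteq> {};
       loop1 VE E \<pi> d (G - attr VE E (odd d) W G) p q Gf Hl c' \<rbrakk>
     \<Longrightarrow> loop1 VE E \<pi> d G p q Gf Hl (c + c')"
| loop2_stop:
    "loop2 VE E \<pi> d G p q False G 0"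
| loop2_step:
    "\<lbrakk> H = G - attr VE E (even d) {v \<in> G. \<pi> v = d} G;
       solve_run VE E \<pi> (d - 1) H (q div 2) p W c;
       loop2 VE E \<pi> d (G - attr VE E (odd d) W G) p q (W \<noteq> {}) Gf c' \<rbrakk>
     \<Longrightarrow> loop2 VE E \<pi> d G p q True Gf (c + c')"

end

theory Submission imports Defs "HOL-Library.Discrete_Functions" begin


locale pg = fixes V VE :: "'v set" and E and \<pi> :: "'v \<Rightarrow> nat"
  assumes pg: "parity_game V VE E \<pi>"
begin

lemma finV: "finite V" using pg by (simp add: parity_game_def)
lemma noloop: "(v,v) \<notin> E" using pg by (simp add: parity_game_def)
lemma prio1: "v \<in> V \<Longrightarrow> 1 \<le> \<pi> v" using pg by (simp add: parity_game_def)

lemma sg_fin: "subgame V E G \<Longrightarrow> finite G"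
  using finV by (auto simp: subgame_def intro: finite_subset)

lemma sg_card2: assumes "subgame V E G" "G \<noteq> {}" shows "2 \<le> card G"
proof -
  obtain v where v: "v \<in> G" using assms(2) by auto
  then obtain w where w: "w \<in> G" "(v,w) \<in> E" using assms(1) by (auto simp: subgame_def)
  have "v \<noteq> w" using w noloop by auto
  hence "card {v,w} = 2" by simp
  moreover have "card {v,w} \<le> card G" using v w sg_fin[OF assms(1)] by (intro card_mono) auto
  ultimately show ?thesis by simp
qed

lemma strat_ex: "subgame V E G \<Longrightarrow> strategy_in VE E pl G (\<lambda>xs. SOME w. w \<in> G \<and> (last xs, w) \<in> E)"
  unfolding strategy_in_def subgame_def
  by (metis (mono_tags, lifting) someI_ex)

lemma S_attr: assumes "subgame V E G" shows "S \<inter> G \<subseteq> attr VE E pl S G"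
  using strat_ex[OF assms] unfolding attr_def consistent_play_def by fastforce

lemma play_ex: assumes sg: "subgame V E G" and s: "strategy_in VE E pl G \<sigma>" and v: "v \<in> G"
  shows "\<exists>\<rho>. consistent_play VE E pl G \<sigma> v \<rho>"
proof -
  define nxt where "nxt xs = (if (last xs \<in> VE) = pl then \<sigma> xs else (SOME w. w \<in> G \<and> (last xs, w) \<in> E))" for xs
  define hist where "hist = rec_nat [v] (\<lambda>_ h. h @ [nxt h])"
  have h0: "hist 0 = [v]" and hS: "hist (Suc i) = hist i @ [nxt (hist i)]" for i
    by (simp_all add: hist_def)
  define \<rho> where "\<rho> i = last (hist i)" for i
  have hm: "hist i = map \<rho> [0..<Suc i]" for i
    by (induction i) (simp_all add: h0 hS \<rho>_def)
  have rS: "\<rho> (Suc i) = nxt (map \<rho> [0..<Suc i])" for i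
  proof -
    have "\<rho> (Suc i) = nxt (hist i)" by (simp add: \<rho>_def hS)
    thus ?thesis using hm[of i] by simp
  qed
  have lst: "last (map \<rho> [0..<Suc i]) = \<rho> i" for i by simp
  have nG: "x \<in> G \<Longrightarrow> last xs = x \<Longrightarrow> xs \<noteq> [] \<Longrightarrow> nxt xs \<in> G \<and> (x, nxt xs) \<in> E" for xs x
  proof -
    assume a: "x \<in> G" "last xs = x" "xs \<noteq> []"
    show ?thesis
    proof (cases "(last xs \<in> VE) = pl")
      case True thus ?thesis using s a unfolding strategy_in_def nxt_def by auto
    next
      case False
      have "\<exists>w. w \<in> G \<and> (last xs, w) \<in> E" using sg a unfolding subgame_def by auto
      from someI_ex[OF this] False a show ?thesis unfolding nxt_def by auto
    qed
  qed
  have inG: "\<rho> i \<in> G" for i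
  proof (induction i)
    case 0 thus ?case using v by (simp add: \<rho>_def h0)
  next
    case (Suc i) thus ?case using nG[of "\<rho> i" "map \<rho> [0..<Suc i]"] rS[of i] by simp
  qed
  have edge: "(\<rho> i, \<rho> (Suc i)) \<in> E" for i
    using nG[of "\<rho> i" "map \<rho> [0..<Suc i]"] rS[of i] inG[of i] by simp
  have cons: "(\<rho> i \<in> VE) = pl \<Longrightarrow> \<rho> (Suc i) = \<sigma> (map \<rho> [0..<Suc i])" for i
    using rS[of i] by (simp add: nxt_def)
  show ?thesis unfolding consistent_play_def
    using inG edge cons by (intro exI[of _ \<rho>]) (auto simp: \<rho>_def h0)
qed

lemma attr_empty: assumes "subgame V E G" shows "attr VE E pl {} G = {}"
  using play_ex[OF assms] unfolding attr_def by blast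

lemma tl_map: "tl (map \<rho> [0..<Suc (Suc i)]) = map (\<lambda>j. \<rho> (Suc j)) [0..<Suc i]"
proof -
  have "map \<rho> [0..<Suc (Suc i)] = \<rho> 0 # map \<rho> [Suc 0..<Suc (Suc i)]"
    by (simp add: upt_conv_Cons del: upt_Suc)
  moreover have "map \<rho> [Suc 0..<Suc (Suc i)] = map (\<lambda>j. \<rho> (Suc j)) [0..<Suc i]"
  proof -
    have "[Suc 0..<Suc (Suc i)] = map Suc [0..<Suc i]" by (rule map_Suc_upt[symmetric])
    thus ?thesis by (simp del: upt_Suc)
  qed
  ultimately show ?thesis by (simp del: upt_Suc)
qed

lemma attr_closed: assumes sg: "subgame V E G" shows "subgame V E (G - attr VE E pl S G)"
proof -
  let ?A = "attr VE E pl S G"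
  have "\<forall>v\<in>G - ?A. \<exists>w\<in>G - ?A. (v,w)\<in>E"
  proof (rule ballI, rule ccontr)
    fix v assume v: "v \<in> G - ?A" and nw: "\<not> (\<exists>w\<in>G - ?A. (v,w)\<in>E)"
    obtain w0 where w0: "w0 \<in> G" "(v,w0)\<in>E" using sg v by (auto simp: subgame_def)
    define \<sigma>0 where "\<sigma>0 = (\<lambda>xs. SOME w. w \<in> G \<and> (last xs, w) \<in> E)"
    have s0: "strategy_in VE E pl G \<sigma>0" using strat_ex[OF sg] by (simp add: \<sigma>0_def)
    define P where "P w \<sigma> \<longleftrightarrow> strategy_in VE E pl G \<sigma> \<and> (\<forall>\<rho>. consistent_play VE E pl G \<sigma> w \<rho> \<longrightarrow> (\<exists>i. \<rho> i \<in> S))" for w \<sigma>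
    define sw where "sw w = (SOME \<sigma>. P w \<sigma>)" for w
    have swP: "P w (sw w)" if "w \<in> ?A" for w
    proof -
      have "\<exists>\<sigma>. P w \<sigma>" using that unfolding attr_def P_def by blast
      thus ?thesis unfolding sw_def by (rule someI_ex)
    qed
    define \<sigma>' where "\<sigma>' xs = (if 2 \<le> length xs \<and> xs!1 \<in> ?A then sw (xs!1) (tl xs) else if xs = [v] then w0 else \<sigma>0 xs)" for xs
    have s': "strategy_in VE E pl G \<sigma>'"
      unfolding strategy_in_def
    proof (intro allI impI)
      fix xs assume a: "xs \<noteq> [] \<and> last xs \<in> G \<and> (last xs \<in> VE) = pl"
      show "\<sigma>' xs \<in> G \<and> (last xs, \<sigma>' xs) \<in> E"
      proof (cases "2 \<le> length xs \<and> xs!1 \<in> ?A")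
        case True
        hence "strategy_in VE E pl G (sw (xs!1))" using swP P_def by blast
        moreover have "tl xs \<noteq> []" "last (tl xs) = last xs" using True a
          by (cases xs; auto)+
        ultimately show ?thesis using a True unfolding strategy_in_def \<sigma>'_def by auto
      next
        case False
        thus ?thesis using a w0 s0 unfolding strategy_in_def \<sigma>'_def by auto
      qed
    qed
    have "\<forall>\<rho>. consistent_play VE E pl G \<sigma>' v \<rho> \<longrightarrow> (\<exists>i. \<rho> i \<in> S)"
    proof (intro allI impI)
      fix \<rho> assume c: "consistent_play VE E pl G \<sigma>' v \<rho>"
      have "\<rho> 1 \<in> G" "(v, \<rho> 1) \<in> E" using c unfolding consistent_play_def by (metis One_nat_def)+
      hence r1: "\<rho> 1 \<in> ?A" using nw by blast
      define \<rho>' where "\<rho>' i = \<rho> (Suc i)" for i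
      have p1: "\<rho>' i \<in> G \<and> (\<rho>' i, \<rho>' (Suc i)) \<in> E" for i using c by (simp add: \<rho>'_def consistent_play_def)
      have p2: "\<rho>' (Suc i) = sw (\<rho> 1) (map \<rho>' [0..<Suc i])" if o: "(\<rho>' i \<in> VE) = pl" for i
      proof -
        have "\<rho> (Suc (Suc i)) = \<sigma>' (map \<rho> [0..<Suc (Suc i)])"
          using c o unfolding consistent_play_def \<rho>'_def by blast
        moreover have "map \<rho> [0..<Suc (Suc i)] ! 1 = \<rho> 1"
          by (simp del: upt_Suc add: nth_map)
        ultimately show ?thesis
          using r1 tl_map[of \<rho> i] unfolding \<sigma>'_def \<rho>'_def by (simp del: upt_Suc)
      qed
      have "consistent_play VE E pl G (sw (\<rho> 1)) (\<rho> 1) \<rho>'"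
        unfolding consistent_play_def using p1 p2 by (simp add: \<rho>'_def)
      then obtain i where "\<rho>' i \<in> S" using swP[OF r1] unfolding P_def by blast
      thus "\<exists>i. \<rho> i \<in> S" by (auto simp: \<rho>'_def)
    qed
    hence "v \<in> ?A" using v s' unfolding attr_def by blast
    with v show False by simp
  qed
  thus ?thesis using sg by (auto simp: subgame_def)
qed

end


definition phi :: "'a set \<Rightarrow> nat" where "phi S = max 1 (card S)"
definition Bd :: "nat \<Rightarrow> nat \<Rightarrow> nat \<Rightarrow> nat" where "Bd n d l = 2 * n ^ l * ((d + l) choose l) - 1"
definition hh :: "nat \<Rightarrow> nat \<Rightarrow> nat \<Rightarrow> nat \<Rightarrow> nat" where
  "hh n d q l = (if 2 \<le> q then Bd n (d-1) (l-1) else 1)"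

lemma choose_le_Suc: "(m::nat) choose k \<le> Suc m choose k"
  by (cases k) auto

lemma Bd_ge1: "1 \<le> n \<Longrightarrow> 1 \<le> Bd n d l"
proof -
  assume n: "1 \<le> n"
  have "1 \<le> n ^ l" using n by simp
  moreover have "1 \<le> (d + l) choose l" by (simp add: Suc_leI)
  ultimately have "1 \<le> n ^ l * ((d + l) choose l)" by (simp add: Suc_le_eq)
  thus ?thesis unfolding Bd_def by linarith
qed

lemma arith_main:
  assumes n: "1 \<le> n" and d: "1 \<le> d" and l: "1 \<le> l" and h: "h \<le> Bd n (d-1) (l-1) \<or> h = 1"
  shows "1 + n * h + Bd n (d-1) l \<le> Bd n d l"
proof -
  obtain d' where d': "d = Suc d'" using d by (cases d) auto
  obtain l' where l': "l = Suc l'" using l by (cases l) auto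
  define N where "N = n ^ l'"
  define X where "X = (d' + l') choose l'"
  define Y where "Y = (d' + Suc l') choose (Suc l')"
  define Z where "Z = (d' + Suc l') choose l'"
  have N1: "1 \<le> N" using n by (simp add: N_def)
  have X1: "1 \<le> X" by (simp add: X_def Suc_leI)
  have Z1: "1 \<le> Z" by (simp add: Z_def Suc_leI)
  have XZ: "X \<le> Z" using choose_le_Suc[of "d'+l'" l'] by (simp add: X_def Z_def)
  have B1: "Bd n (d-1) (l-1) = 2 * N * X - 1" by (simp add: Bd_def d' l' N_def X_def)
  have B2: "Bd n (d-1) l = 2 * (n * N) * Y - 1" by (simp add: Bd_def d' l' N_def Y_def)
  have B3: "Bd n d l = 2 * (n * N) * (Y + Z) - 1"
  proof -
    have "Suc d' + Suc l' = Suc (d' + Suc l')" by simp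
    thus ?thesis by (simp add: Bd_def d' l' N_def Y_def Z_def add.commute)
  qed
  have m1: "n * N * X \<le> n * N * Z" using XZ by simp
  have m2: "n \<le> n * N * Z" using mult_le_mono[OF mult_le_mono[OF le_refl[of n] N1] Z1] by simp
  have m3: "1 \<le> n * N * X" using N1 X1 n by (simp add: Suc_le_eq)
  have hb: "n * h \<le> 2 * (n * N * X) - n \<or> n * h = n" using h
  proof
    assume "h \<le> Bd n (d-1) (l-1)"
    hence "n * h \<le> n * (2 * N * X - 1)" using B1 by simp
    also have "\<dots> = 2 * (n * N * X) - n" by (simp add: diff_mult_distrib2 algebra_simps)
    finally show ?thesis by simp
  qed simp
  have "n * N * (Y + Z) = n * N * Y + n * N * Z" by (simp add: algebra_simps)
  hence B3': "Bd n d l = 2 * (n * N * Y) + 2 * (n * N * Z) - 1" using B3 by (simp add: algebra_simps)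
  have B2': "Bd n (d-1) l = 2 * (n * N * Y) - 1" using B2 by (simp add: algebra_simps)
  have Y1: "1 \<le> n * N * Y" using N1 n by (simp add: Y_def Suc_leI)
  show ?thesis using hb m1 m2 m3 Y1 B2' B3' n by (elim disjE) linarith+
qed

context pg begin

lemma phi_ge1: "1 \<le> phi S" by (simp add: phi_def)

lemma phi_mono: "finite G \<Longrightarrow> G' \<subseteq> G \<Longrightarrow> phi G' \<le> phi G"
  unfolding phi_def using card_mono by (metis max.mono order_refl)

lemma phi_less: assumes "subgame V E G" "G' \<subset> G" shows "phi G' < phi G"
proof -
  have f: "finite G" using sg_fin[OF assms(1)] .
  have "G \<noteq> {}" using assms(2) by auto
  hence c2: "2 \<le> card G" using sg_card2 assms(1) by blast
  have "card G' < card G" using psubset_card_mono[OF f assms(2)] .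
  thus ?thesis using c2 unfolding phi_def by linarith
qed

lemma phi_card: "subgame V E G \<Longrightarrow> G \<noteq> {} \<Longrightarrow> phi G = card G"
  using sg_card2 unfolding phi_def by fastforce

lemma attr_sub: "attr VE E pl S G \<subseteq> G" by (auto simp: attr_def)

lemma H_props:
  assumes "subgame V E G" "\<forall>v\<in>G. \<pi> v \<le> d" "H = G - attr VE E pl {v \<in> G. \<pi> v = d} G"
  shows "subgame V E H \<and> H \<subseteq> G \<and> (\<forall>v\<in>H. \<pi> v \<le> d - 1)"
proof -
  have "{v \<in> G. \<pi> v = d} \<inter> G \<subseteq> attr VE E pl {v \<in> G. \<pi> v = d} G" by (rule S_attr[OF assms(1)])
  thus ?thesis using assms attr_closed[OF assms(1)] by fastforce
qed

lemma removal:
  assumes "subgame V E G" "W \<subseteq> G" "W \<noteq> {}"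
  shows "subgame V E (G - attr VE E pl W G) \<and> phi (G - attr VE E pl W G) < phi G"
proof -
  have "W \<inter> G \<subseteq> attr VE E pl W G" by (rule S_attr[OF assms(1)])
  hence "G - attr VE E pl W G \<subset> G" using assms(2,3) by blast
  thus ?thesis using attr_closed[OF assms(1)] phi_less[OF assms(1)] by blast
qed

lemma base_cost: "solve_run VE E \<pi> d G p q W c \<Longrightarrow> p \<le> 1 \<Longrightarrow> c = 1"
  by (induct rule: solve_run.cases) auto

lemma halved:
  assumes r: "solve_run VE E \<pi> (d-1) H (q div 2) p W c"
    and IH: "c \<le> Bd n (d-1) (floor_log (q div 2) + floor_log p)"
  shows "c \<le> hh n d q (floor_log p + floor_log q)"
proof (cases "2 \<le> q")
  case True
  have "1 \<le> floor_log q" using floor_log_rec[OF True] by simp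
  hence "floor_log (q div 2) + floor_log p = floor_log p + floor_log q - 1" by simp
  thus ?thesis using IH True by (simp add: hh_def)
next
  case False
  hence "q div 2 = 0" by simp
  hence "c = 1" using base_cost r by simp
  thus ?thesis using False by (simp add: hh_def)
qed

end


context pg begin

lemma bound:
  assumes n1: "1 \<le> n"
  shows "solve_run VE E \<pi> d G p q W c \<Longrightarrow> subgame V E G \<longrightarrow> (\<forall>v\<in>G. \<pi> v \<le> d) \<longrightarrow> card G \<le> n \<longrightarrow>
           c \<le> Bd n d (floor_log p + floor_log q) \<and> W \<subseteq> G"
  and "loop1 VE E \<pi> d G p q Gf Hl c \<Longrightarrow> subgame V E G \<longrightarrow> (\<forall>v\<in>G. \<pi> v \<le> d) \<longrightarrow> card G \<le> n \<longrightarrow>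
           c + hh n d q (floor_log p + floor_log q) * phi Gf \<le> hh n d q (floor_log p + floor_log q) * (1 + phi G)
           \<and> subgame V E Gf \<and> Gf \<subseteq> G \<and> subgame V E Hl \<and> Hl \<subseteq> Gf \<and> (\<forall>v\<in>Hl. \<pi> v \<le> d - 1)"
  and "loop2 VE E \<pi> d G p q b Gf c \<Longrightarrow> subgame V E G \<longrightarrow> (\<forall>v\<in>G. \<pi> v \<le> d) \<longrightarrow> card G \<le> n \<longrightarrow>
           c + hh n d q (floor_log p + floor_log q) * phi Gf \<le>
             (if b then hh n d q (floor_log p + floor_log q) * (1 + phi G) else hh n d q (floor_log p + floor_log q) * phi G)
           \<and> subgame V E Gf \<and> Gf \<subseteq> G"
proof (induct rule: solve_run_loop1_loop2.inducts)
  case (solve_base G p d q)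
  then show ?case using Bd_ge1[OF n1] by simp
next
  case (solve_step G p d q G1 H c1 W c2 G2 G3 c3)
  show ?case
  proof (intro impI)
    assume sg: "subgame V E G" and pr: "\<forall>v\<in>G. \<pi> v \<le> d" and cd: "card G \<le> n"
    let ?l = "floor_log p + floor_log q"
    let ?h = "hh n d q ?l"
    have L1: "c1 + ?h * phi G1 \<le> ?h * (1 + phi G)" and sg1: "subgame V E G1" and s1: "G1 \<subseteq> G"
      and sgH: "subgame V E H" and sH: "H \<subseteq> G1" and prH: "\<forall>v\<in>H. \<pi> v \<le> d - 1"
      using solve_step(4) sg pr cd by auto
    have fG: "finite G" using sg_fin[OF sg] .
    have cH: "card H \<le> n" using card_mono[OF fG] sH s1 cd by (meson order_trans)
    have M: "c2 \<le> Bd n (d-1) (floor_log q + floor_log p)" and WH: "W \<subseteq> H"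
      using solve_step(6) sgH prH cH by auto
    have sg2: "subgame V E G2" using attr_closed[OF sg1] solve_step(7) by simp
    have s2: "G2 \<subseteq> G1" using solve_step(7) by auto
    have "G2 \<subseteq> G" using s2 s1 by blast
    hence cG2: "card G2 \<le> n" using card_mono[OF fG, of G2] cd by linarith
    have pr2: "\<forall>v\<in>G2. \<pi> v \<le> d" using s2 s1 pr by auto
    have L3: "c3 + ?h * phi G3 \<le> (if W \<noteq> {} then ?h * (1 + phi G2) else ?h * phi G2)"
      and sg3: "subgame V E G3" and s3: "G3 \<subseteq> G2"
      using solve_step(9) sg2 pr2 cG2 by auto
    have fG1: "finite G1" using sg_fin[OF sg1] .
    have C13: "c1 + c3 + ?h * phi G3 \<le> ?h * (1 + phi G)"
    proof (cases "W = {}")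
      case True
      have "phi G2 \<le> phi G1" using phi_mono[OF fG1 s2] .
      hence a: "?h * phi G2 \<le> ?h * phi G1" by simp
      have b: "c3 + ?h * phi G3 \<le> ?h * phi G2" using L3 True by simp
      show ?thesis using L1 a b by linarith
    next
      case False
      have "W \<subseteq> G1" using WH sH by blast
      from removal[OF sg1 this False, of "odd d"] have "phi G2 < phi G1" using solve_step(7) by simp
      hence a: "?h * (1 + phi G2) \<le> ?h * phi G1" by (intro mult_le_mono2) simp
      have b: "c3 + ?h * phi G3 \<le> ?h * (1 + phi G2)" using L3 False by simp
      show ?thesis using L1 a b by linarith
    qed
    have a: "?h \<le> ?h * phi G3" using mult_le_mono2[OF phi_ge1[of G3], of ?h] by simp
    have b: "?h * (1 + phi G) = ?h + ?h * phi G" by (simp add: algebra_simps)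
    have C13': "c1 + c3 \<le> ?h * phi G" using C13 a b by linarith
    have "phi G = card G" using phi_card[OF sg solve_step(1)] .
    hence "?h * phi G \<le> n * ?h" using cd by simp
    hence C13'': "c1 + c3 \<le> n * ?h" using C13' by linarith
    obtain v where "v \<in> G" using solve_step(1) by auto
    hence d1: "1 \<le> d" using pr prio1 sg by (force simp: subgame_def)
    have lp: "1 \<le> floor_log p" using floor_log_rec[of p] solve_step(2) by simp
    hence l1: "1 \<le> ?l" by simp
    have "?h \<le> Bd n (d-1) (?l-1) \<or> ?h = 1" by (simp add: hh_def)
    from arith_main[OF n1 d1 l1 this]
    have "1 + n * ?h + Bd n (d - 1) ?l \<le> Bd n d ?l" .
    moreover have "Bd n (d-1) (floor_log q + floor_log p) = Bd n (d-1) ?l" by (simp add: add.commute)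
    ultimately have "1 + c1 + c2 + c3 \<le> Bd n d ?l" using C13'' M by linarith
    moreover have "G3 \<subseteq> G" using s3 s2 s1 by blast
    ultimately show "1 + c1 + c2 + c3 \<le> Bd n d ?l \<and> G3 \<subseteq> G" by blast
  qed
next
  case (loop1_stop H G d q p W c)
  show ?case
  proof (intro impI)
    assume sg: "subgame V E G" and pr: "\<forall>v\<in>G. \<pi> v \<le> d" and cd: "card G \<le> n"
    let ?h = "hh n d q (floor_log p + floor_log q)"
    have HP: "subgame V E H \<and> H \<subseteq> G \<and> (\<forall>v\<in>H. \<pi> v \<le> d - 1)"
      using H_props[OF sg pr loop1_stop(1)] .
    have fG: "finite G" using sg_fin[OF sg] .
    have cH: "card H \<le> n" using card_mono[OF fG] HP cd by (meson order_trans)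
    have "c \<le> Bd n (d-1) (floor_log (q div 2) + floor_log p)" using loop1_stop(3) HP cH by auto
    hence ch: "c \<le> ?h" by (rule halved[OF loop1_stop(2)])
    have eq: "G - attr VE E (odd d) W G = G" using attr_empty[OF sg] loop1_stop(4) by simp
    show "c + ?h * phi (G - attr VE E (odd d) W G) \<le> ?h * (1 + phi G) \<and>
      subgame V E (G - attr VE E (odd d) W G) \<and> G - attr VE E (odd d) W G \<subseteq> G \<and>
      subgame V E H \<and> H \<subseteq> G - attr VE E (odd d) W G \<and> (\<forall>v\<in>H. \<pi> v \<le> d - 1)"
      using eq ch HP sg by (simp add: algebra_simps)
  qed
next
  case (loop1_cont H G d q p W c Gf Hl c')
  show ?case
  proof (intro impI)
    assume sg: "subgame V E G" and pr: "\<forall>v\<in>G. \<pi> v \<le> d" and cd: "card G \<le> n"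
    let ?h = "hh n d q (floor_log p + floor_log q)"
    let ?G' = "G - attr VE E (odd d) W G"
    have HP: "subgame V E H \<and> H \<subseteq> G \<and> (\<forall>v\<in>H. \<pi> v \<le> d - 1)"
      using H_props[OF sg pr loop1_cont(1)] .
    have fG: "finite G" using sg_fin[OF sg] .
    have cH: "card H \<le> n" using card_mono[OF fG] HP cd by (meson order_trans)
    have cB: "c \<le> Bd n (d-1) (floor_log (q div 2) + floor_log p)" and WH: "W \<subseteq> H"
      using loop1_cont(3) HP cH by auto
    have ch: "c \<le> ?h" by (rule halved[OF loop1_cont(2) cB])
    have "W \<subseteq> G" using WH HP by blast
    hence R: "subgame V E ?G' \<and> phi ?G' < phi G" using removal[OF sg _ loop1_cont(4)] by blast
    have cG': "card ?G' \<le> n" using card_mono[OF fG, of ?G'] cd by auto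
    have pr': "\<forall>v\<in>?G'. \<pi> v \<le> d" using pr by auto
    have I: "c' + ?h * phi Gf \<le> ?h * (1 + phi ?G') \<and> subgame V E Gf \<and> Gf \<subseteq> ?G' \<and>
          subgame V E Hl \<and> Hl \<subseteq> Gf \<and> (\<forall>v\<in>Hl. \<pi> v \<le> d - 1)"
      using loop1_cont(6) R cG' pr' by blast
    have "?h * (1 + phi ?G') + ?h \<le> ?h * (1 + phi G)"
    proof -
      have "?h * (1 + phi ?G') + ?h = ?h * (1 + phi ?G' + 1)" by (simp add: algebra_simps)
      also have "\<dots> \<le> ?h * (1 + phi G)" using R by (intro mult_le_mono2) simp
      finally show ?thesis .
    qed
    thus "c + c' + ?h * phi Gf \<le> ?h * (1 + phi G) \<and> subgame V E Gf \<and> Gf \<subseteq> G \<and>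
          subgame V E Hl \<and> Hl \<subseteq> Gf \<and> (\<forall>v\<in>Hl. \<pi> v \<le> d - 1)"
      using I ch by auto
  qed
next
  case (loop2_stop d G p q)
  then show ?case by simp
next
  case (loop2_step H G d q p W c Gf c')
  show ?case
  proof (intro impI)
    assume sg: "subgame V E G" and pr: "\<forall>v\<in>G. \<pi> v \<le> d" and cd: "card G \<le> n"
    let ?h = "hh n d q (floor_log p + floor_log q)"
    let ?G' = "G - attr VE E (odd d) W G"
    have HP: "subgame V E H \<and> H \<subseteq> G \<and> (\<forall>v\<in>H. \<pi> v \<le> d - 1)"
      using H_props[OF sg pr loop2_step(1)] .
    have fG: "finite G" using sg_fin[OF sg] .
    have cH: "card H \<le> n" using card_mono[OF fG] HP cd by (meson order_trans)
    have cB: "c \<le> Bd n (d-1) (floor_log (q div 2) + floor_log p)" and WH: "W \<subseteq> H"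
      using loop2_step(3) HP cH by auto
    have ch: "c \<le> ?h" by (rule halved[OF loop2_step(2) cB])
    have sg': "subgame V E ?G'" using attr_closed[OF sg] .
    have cG': "card ?G' \<le> n" using card_mono[OF fG, of ?G'] cd by auto
    have pr': "\<forall>v\<in>?G'. \<pi> v \<le> d" using pr by auto
    have I: "c' + ?h * phi Gf \<le> (if W \<noteq> {} then ?h * (1 + phi ?G') else ?h * phi ?G') \<and> subgame V E Gf \<and> Gf \<subseteq> ?G'"
      using loop2_step(5) sg' cG' pr' by blast
    have "c + c' + ?h * phi Gf \<le> ?h * (1 + phi G)"
    proof (cases "W = {}")
      case True
      have "phi ?G' \<le> phi G" by (rule phi_mono[OF fG]) blast
      hence a: "?h * phi ?G' \<le> ?h * phi G" by simp
      have b: "c' + ?h * phi Gf \<le> ?h * phi ?G'" using I True by simp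
      have e: "?h * (1 + phi G) = ?h + ?h * phi G" by (simp add: algebra_simps)
      show ?thesis using a b e ch by linarith
    next
      case False
      have "W \<subseteq> G" using WH HP by blast
      hence R: "phi ?G' < phi G" using removal[OF sg _ False] by blast
      have "?h * (1 + phi ?G') + ?h = ?h * (1 + phi ?G' + 1)" by (simp add: algebra_simps)
      also have "\<dots> \<le> ?h * (1 + phi G)" using R by (intro mult_le_mono2) simp
      finally have a: "?h * (1 + phi ?G') + ?h \<le> ?h * (1 + phi G)" .
      have b: "c' + ?h * phi Gf \<le> ?h * (1 + phi ?G')" using I False by simp
      show ?thesis using a b ch by linarith
    qed
    moreover have "subgame V E Gf" using I by blast
    moreover have "Gf \<subseteq> G" using I by blast
    ultimately show "c + c' + ?h * phi Gf \<le> (if True then ?h * (1 + phi G) else ?h * phi G) \<and> subgame V E Gf \<and> Gf \<subseteq> G"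
      by simp
  qed
qed

end


context pg begin

lemma subs:
  shows "solve_run VE E \<pi> d G p q W c \<Longrightarrow> W \<subseteq> G"
  and "loop1 VE E \<pi> d G p q Gf Hl c \<Longrightarrow> Gf \<subseteq> G"
  and "loop2 VE E \<pi> d G p q b Gf c \<Longrightarrow> Gf \<subseteq> G"
  by (induct rule: solve_run_loop1_loop2.inducts) auto

lemma exists:
  "subgame V E G \<Longrightarrow> (\<forall>v\<in>G. \<pi> v \<le> d) \<Longrightarrow> \<exists>W c. solve_run VE E \<pi> d G p q W c"
proof (induction d arbitrary: G p q)
  case 0
  have "G = {}"
  proof (rule ccontr)
    assume "G \<noteq> {}"
    then obtain v where "v \<in> G" by auto
    thus False using 0 prio1[of v] by (force simp: subgame_def)
  qed
  thus ?case using solve_base by blast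
next
  case (Suc d')
  show ?case
  proof (cases "G = {} \<or> p \<le> 1")
    case True thus ?thesis using solve_base by blast
  next
    case False
    let ?d = "Suc d'"
    have L1: "\<exists>Gf Hl c. loop1 VE E \<pi> ?d G' p q Gf Hl c \<and> subgame V E Gf \<and> subgame V E Hl \<and> (\<forall>v\<in>Hl. \<pi> v \<le> d')"
      if "subgame V E G'" "\<forall>v\<in>G'. \<pi> v \<le> ?d" for G'
      using that
    proof (induction "card G'" arbitrary: G' rule: less_induct)
      case less
      define H where "H = G' - attr VE E (even ?d) {v \<in> G'. \<pi> v = ?d} G'"
      have HP: "subgame V E H \<and> H \<subseteq> G' \<and> (\<forall>v\<in>H. \<pi> v \<le> ?d - 1)"
        using H_props[OF less.prems H_def] .
      then obtain W c where r: "solve_run VE E \<pi> d' H (q div 2) p W c"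
        using Suc.IH[of H "q div 2" p] HP by auto
      have WH: "W \<subseteq> H" using subs(1)[OF r] .
      have r': "solve_run VE E \<pi> (?d - 1) H (q div 2) p W c" using r by simp
      let ?G2 = "G' - attr VE E (odd ?d) W G'"
      have sg2: "subgame V E ?G2" using attr_closed[OF less.prems(1)] .
      show ?case
      proof (cases "W = {}")
        case True
        have "loop1 VE E \<pi> ?d G' p q ?G2 H c" by (rule loop1_stop[OF H_def r' True])
        thus ?thesis using sg2 HP by auto
      next
        case False
        have "W \<inter> G' \<subseteq> attr VE E (odd ?d) W G'" by (rule S_attr[OF less.prems(1)])
        hence ps: "?G2 \<subset> G'" using WH HP False by blast
        have "card ?G2 < card G'" using psubset_card_mono[OF sg_fin[OF less.prems(1)] ps] .
        moreover have "\<forall>v\<in>?G2. \<pi> v \<le> ?d" using less.prems(2) by auto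
        ultimately obtain Gf Hl c' where l: "loop1 VE E \<pi> ?d ?G2 p q Gf Hl c'" and
          rest: "subgame V E Gf \<and> subgame V E Hl \<and> (\<forall>v\<in>Hl. \<pi> v \<le> d')"
          using less.hyps[OF _ sg2] by blast
        have "loop1 VE E \<pi> ?d G' p q Gf Hl (c + c')" by (rule loop1_cont[OF H_def r' False l])
        thus ?thesis using rest by blast
      qed
    qed
    have L2: "\<exists>Gf c. loop2 VE E \<pi> ?d G' p q b Gf c"
      if "subgame V E G'" "\<forall>v\<in>G'. \<pi> v \<le> ?d" for G' b
      using that
    proof (induction "card G'" arbitrary: G' b rule: less_induct)
      case less
      show ?case
      proof (cases b)
        case False thus ?thesis using loop2_stop[of VE E \<pi> ?d G' p q] by (simp; blast)
      next
        case True
        define H where "H = G' - attr VE E (even ?d) {v \<in> G'. \<pi> v = ?d} G'"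
        have HP: "subgame V E H \<and> H \<subseteq> G' \<and> (\<forall>v\<in>H. \<pi> v \<le> ?d - 1)"
          using H_props[OF less.prems H_def] .
        then obtain W c where r: "solve_run VE E \<pi> d' H (q div 2) p W c"
          using Suc.IH[of H "q div 2" p] HP by auto
        have WH: "W \<subseteq> H" using subs(1)[OF r] .
        have r': "solve_run VE E \<pi> (?d - 1) H (q div 2) p W c" using r by simp
        let ?G2 = "G' - attr VE E (odd ?d) W G'"
        have sg2: "subgame V E ?G2" using attr_closed[OF less.prems(1)] .
        have "\<exists>Gf c'. loop2 VE E \<pi> ?d ?G2 p q (W \<noteq> {}) Gf c'"
        proof (cases "W = {}")
          case True thus ?thesis using loop2_stop[of VE E \<pi> ?d ?G2 p q] by auto
        next
          case False
          have "W \<inter> G' \<subseteq> attr VE E (odd ?d) W G'" by (rule S_attr[OF less.prems(1)])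
          hence ps: "?G2 \<subset> G'" using WH HP False by blast
          have "card ?G2 < card G'" using psubset_card_mono[OF sg_fin[OF less.prems(1)] ps] .
          moreover have "\<forall>v\<in>?G2. \<pi> v \<le> ?d" using less.prems(2) by auto
          ultimately show ?thesis using less.hyps[OF _ sg2] by blast
        qed
        then obtain Gf c' where l: "loop2 VE E \<pi> ?d ?G2 p q (W \<noteq> {}) Gf c'" by blast
        have "loop2 VE E \<pi> ?d G' p q True Gf (c + c')" by (rule loop2_step[OF H_def r' l])
        thus ?thesis using True by (simp; blast)
      qed
    qed
    obtain G1 Hl c1 where l1: "loop1 VE E \<pi> ?d G p q G1 Hl c1" and sg1: "subgame V E G1"
      and sgH: "subgame V E Hl" and prH: "\<forall>v\<in>Hl. \<pi> v \<le> d'"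
      using L1[OF Suc.prems] by blast
    obtain W c2 where r: "solve_run VE E \<pi> d' Hl q p W c2" using Suc.IH[OF sgH prH] by blast
    have r': "solve_run VE E \<pi> (?d - 1) Hl q p W c2" using r by simp
    let ?G2 = "G1 - attr VE E (odd ?d) W G1"
    have sg2: "subgame V E ?G2" using attr_closed[OF sg1] .
    have "G1 \<subseteq> G" using subs(2)[OF l1] .
    hence "\<forall>v\<in>?G2. \<pi> v \<le> ?d" using Suc.prems(2) by auto
    then obtain G3 c3 where l2: "loop2 VE E \<pi> ?d ?G2 p q (W \<noteq> {}) G3 c3" using L2[OF sg2] by blast
    have "G \<noteq> {}" "1 < p" using False by auto
    from solve_step[OF this l1 r' refl l2] show ?thesis by blast
  qed
qed

end

theorem mainTheorem7:
  fixes V VE :: "'v set" and E :: "('v \<times> 'v) set" and \<pi> :: "'v \<Rightarrow> nat"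
    and G :: "'v set" and n d l pE pO :: nat
  assumes "parity_game V VE E \<pi>"
    and "1 \<le> n"
    and "subgame V E G"
    and "card G \<le> n"
    and "\<forall>v\<in>G. \<pi> v \<le> d"
    and "1 \<le> pE" and "1 \<le> pO"
    and "\<lfloor>log 2 (real pE)\<rfloor> + \<lfloor>log 2 (real pO)\<rfloor> = int l"
  shows "(let p = (if even d then pE else pO); q = (if even d then pO else pE) in
           (\<exists>W c. solve_run VE E \<pi> d G p q W c) \<and>
           (\<forall>W c. solve_run VE E \<pi> d G p q W c \<longrightarrow>
                  c \<le> 2 * n ^ l * ((d + l) choose l) - 1))"
proof -
  interpret pg V VE E \<pi> using assms(1) by (unfold_locales)
  have fl: "int (floor_log x) = \<lfloor>log 2 (real x)\<rfloor>" if "1 \<le> x" for x :: nat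
  proof -
    have "0 \<le> log 2 (real x)" using that by simp
    hence "0 \<le> \<lfloor>log 2 (real x)\<rfloor>" by simp
    thus ?thesis using that floor_log_altdef[of x] by simp
  qed
  have L: "floor_log pE + floor_log pO = l" using fl[OF assms(6)] fl[OF assms(7)] assms(8) by linarith
  define p where "p = (if even d then pE else pO)"
  define q where "q = (if even d then pO else pE)"
  have pq: "floor_log p + floor_log q = l" using L by (simp add: p_def q_def add.commute)
  have ex: "\<exists>W c. solve_run VE E \<pi> d G p q W c" using exists[OF assms(3,5)] .
  have bd: "\<forall>W c. solve_run VE E \<pi> d G p q W c \<longrightarrow> c \<le> 2 * n ^ l * ((d + l) choose l) - 1"
  proof (intro allI impI)
    fix W c assume "solve_run VE E \<pi> d G p q W c"
    from bound(1)[OF assms(2) this] assms(3,4,5) pq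
    show "c \<le> 2 * n ^ l * ((d + l) choose l) - 1" by (simp add: Bd_def)
  qed
  show ?thesis using ex bd by (simp add: p_def q_def Let_def)
qed


end
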